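(* Let $D$ be a core digraph without non-trivial automorphisms such that the almost-sure theory of the class of $D$-coloured digraphs equals the theory of $C_D$. Then asymptotically almost surely, a graph from $\mathrm{Csp}(D)$ has exactly one homomorphism to $D$.
   Context: $D$ is a finite digraph. $\mathrm{Csp}(D)$ is the class of all finite digraphs with a homomorphism to $D$. A $D$-coloured digraph is a digraph $G$ with unary predicates $P_u$ ($u \in V(D)$) such that each vertex lies in exactly one $P_u$ and the map sending $x \in P_u$ to $u$ is a homomorphism $G \to D$. $C_D$ is the (unique up to isomorphism) countable homogeneous $D$-coloured digraph whose finite substructures are exactly the finite $D$-coloured digraphs. A core is a finite digraph all of whose endomorphisms are automorphisms. Random graphs are drawn uniformly from those with vertex set $\{1,\dots,n\}$. *)

theory Defs
  imports Complex_Main "HOL-Library.FuncSet"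
begin

text \<open>The target digraph D has a finite vertex type 'd and edge relation ED (loops allowed).
  Finite digraphs on vertex set {1..n} are edge sets E \<subseteq> {1..n} \<times> {1..n}.\<close>

definition is_endo :: "('d \<Rightarrow> 'd \<Rightarrow> bool) \<Rightarrow> ('d \<Rightarrow> 'd) \<Rightarrow> bool" where
  "is_endo ED h \<longleftrightarrow> (\<forall>x y. ED x y \<longrightarrow> ED (h x) (h y))"

definition is_auto :: "('d \<Rightarrow> 'd \<Rightarrow> bool) \<Rightarrow> ('d \<Rightarrow> 'd) \<Rightarrow> bool" where
  "is_auto ED h \<longleftrightarrow> bij h \<and> (\<forall>x y. ED x y \<longleftrightarrow> ED (h x) (h y))"

definition is_core :: "('d::finite \<Rightarrow> 'd \<Rightarrow> bool) \<Rightarrow> bool" where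
  "is_core ED \<longleftrightarrow> (\<forall>h. is_endo ED h \<longrightarrow> is_auto ED h)"

definition homs_to :: "('d \<Rightarrow> 'd \<Rightarrow> bool) \<Rightarrow> nat \<Rightarrow> (nat \<times> nat) set \<Rightarrow> (nat \<Rightarrow> 'd) set" where
  "homs_to ED n E = {h \<in> {1..n} \<rightarrow>\<^sub>E UNIV. \<forall>(x,y)\<in>E. ED (h x) (h y)}"

definition csp_graphs :: "('d \<Rightarrow> 'd \<Rightarrow> bool) \<Rightarrow> nat \<Rightarrow> (nat \<times> nat) set set" where
  "csp_graphs ED n = {E. E \<subseteq> {1..n} \<times> {1..n} \<and> homs_to ED n E \<noteq> {}}"

definition coloured_graphs :: "('d \<Rightarrow> 'd \<Rightarrow> bool) \<Rightarrow> nat \<Rightarrow> ((nat \<times> nat) set \<times> (nat \<Rightarrow> 'd)) set" where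
  "coloured_graphs ED n = {(E, c). E \<subseteq> {1..n} \<times> {1..n} \<and> c \<in> homs_to ED n E}"

text \<open>First-order formulas in the signature {E} \<union> {P_u : u \<in> V(D)} with equality;
  variables are natural numbers.\<close>
datatype 'u fm = Eq nat nat | Edge nat nat | Col 'u nat | Neg "'u fm" | Conj "'u fm" "'u fm"
  | Ex nat "'u fm"

fun fv :: "'u fm \<Rightarrow> nat set" where
  "fv (Eq x y) = {x, y}"
| "fv (Edge x y) = {x, y}"
| "fv (Col u x) = {x}"
| "fv (Neg \<phi>) = fv \<phi>"
| "fv (Conj \<phi> \<psi>) = fv \<phi> \<union> fv \<psi>"
| "fv (Ex x \<phi>) = fv \<phi> - {x}"

definition sentence :: "'u fm \<Rightarrow> bool" where
  "sentence \<phi> \<longleftrightarrow> fv \<phi> = {}"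

text \<open>Satisfaction in a structure with domain V, edge relation R and colouring c
  (c x = u means x \<in> P_u).\<close>
fun sat :: "'v set \<Rightarrow> ('v \<Rightarrow> 'v \<Rightarrow> bool) \<Rightarrow> ('v \<Rightarrow> 'u) \<Rightarrow> (nat \<Rightarrow> 'v) \<Rightarrow> 'u fm \<Rightarrow> bool" where
  "sat V R c a (Eq x y) \<longleftrightarrow> a x = a y"
| "sat V R c a (Edge x y) \<longleftrightarrow> R (a x) (a y)"
| "sat V R c a (Col u x) \<longleftrightarrow> c (a x) = u"
| "sat V R c a (Neg \<phi>) \<longleftrightarrow> \<not> sat V R c a \<phi>"
| "sat V R c a (Conj \<phi> \<psi>) \<longleftrightarrow> sat V R c a \<phi> \<and> sat V R c a \<psi>"
| "sat V R c a (Ex x \<phi>) \<longleftrightarrow> (\<exists>v\<in>V. sat V R c (a(x := v)) \<phi>)"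

definition models :: "'v set \<Rightarrow> ('v \<Rightarrow> 'v \<Rightarrow> bool) \<Rightarrow> ('v \<Rightarrow> 'u) \<Rightarrow> 'u fm \<Rightarrow> bool" where
  "models V R c \<phi> \<longleftrightarrow> (\<forall>a. (\<forall>x. a x \<in> V) \<longrightarrow> sat V R c a \<phi>)"

definition almost_sure_col :: "('d \<Rightarrow> 'd \<Rightarrow> bool) \<Rightarrow> 'd fm \<Rightarrow> bool" where
  "almost_sure_col ED \<phi> \<longleftrightarrow>
     ((\<lambda>n. real (card {G \<in> coloured_graphs ED n. models {1..n} (\<lambda>x y. (x, y) \<in> fst G) (snd G) \<phi>})
          / real (card (coloured_graphs ED n))) \<longlonglongrightarrow> 1)"

text \<open>C_D: a countably infinite (domain nat) homogeneous D-coloured digraph whose finite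
  substructures are exactly the finite D-coloured digraphs.\<close>
definition is_CD :: "('d \<Rightarrow> 'd \<Rightarrow> bool) \<Rightarrow> (nat \<Rightarrow> nat \<Rightarrow> bool) \<Rightarrow> (nat \<Rightarrow> 'd) \<Rightarrow> bool" where
  "is_CD ED R c \<longleftrightarrow>
     (\<forall>x y. R x y \<longrightarrow> ED (c x) (c y)) \<and>
     (\<forall>(m::nat) (Rm :: nat \<Rightarrow> nat \<Rightarrow> bool) (cm :: nat \<Rightarrow> 'd).
        (\<forall>x<m. \<forall>y<m. Rm x y \<longrightarrow> ED (cm x) (cm y)) \<longrightarrow>
        (\<exists>f. inj_on f {..<m} \<and> (\<forall>x<m. \<forall>y<m. R (f x) (f y) \<longleftrightarrow> Rm x y) \<and>
             (\<forall>x<m. c (f x) = cm x))) \<and>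
     (\<forall>A f. finite A \<and> inj_on f A \<and> (\<forall>x\<in>A. \<forall>y\<in>A. R (f x) (f y) \<longleftrightarrow> R x y) \<and>
            (\<forall>x\<in>A. c (f x) = c x) \<longrightarrow>
        (\<exists>g. bij g \<and> (\<forall>x y. R (g x) (g y) \<longleftrightarrow> R x y) \<and> (\<forall>x. c (g x) = c x) \<and>
             (\<forall>x\<in>A. g x = f x)))"

definition theory_CD :: "('d \<Rightarrow> 'd \<Rightarrow> bool) \<Rightarrow> 'd fm \<Rightarrow> bool" where
  "theory_CD ED \<phi> \<longleftrightarrow> (\<forall>R c. is_CD ED R c \<longrightarrow> models UNIV R c \<phi>)"

end

theory Submission
  imports Defs
begin

fun conjs :: "'u fm list \<Rightarrow> 'u fm" where
  "conjs [] = Eq 0 0"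
| "conjs (p # ps) = Conj p (conjs ps)"

fun exs :: "nat list \<Rightarrow> 'u fm \<Rightarrow> 'u fm" where
  "exs [] p = p"
| "exs (x # xs) p = Ex x (exs xs p)"

definition imp :: "'u fm \<Rightarrow> 'u fm \<Rightarrow> 'u fm" where
  "imp p q = Neg (Conj p (Neg q))"

lemma sat_conjs: "sat V R c a (conjs ps) \<longleftrightarrow> (\<forall>p\<in>set ps. sat V R c a p)"
  by (induct ps) auto

lemma fv_conjs: "fv (conjs ps) \<subseteq> insert 0 (\<Union>(fv ` set ps))"
  by (induct ps) auto

lemma fv_exs: "fv (exs xs p) = fv p - set xs"
  by (induct xs) auto

lemma sat_exs: "sat V R c a (exs xs p) \<longleftrightarrow>
   (\<exists>b. (\<forall>i\<in>set xs. b i \<in> V) \<and> sat V R c (\<lambda>i. if i \<in> set xs then b i else a i) p)"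
proof (induct xs arbitrary: a)
  case Nil
  then show ?case by simp
next
  case (Cons x xs)
  show ?case
  proof
    assume "sat V R c a (exs (x # xs) p)"
    then obtain v b where v: "v \<in> V" and b: "\<forall>i\<in>set xs. b i \<in> V"
      and s: "sat V R c (\<lambda>i. if i \<in> set xs then b i else (a(x := v)) i) p"
      using Cons by auto
    define b' where "b' i = (if i \<in> set xs then b i else v)" for i
    have "(\<lambda>i. if i \<in> set (x # xs) then b' i else a i) = (\<lambda>i. if i \<in> set xs then b i else (a(x := v)) i)"
      by (auto simp: b'_def)
    then show "\<exists>b. (\<forall>i\<in>set (x # xs). b i \<in> V) \<and> sat V R c (\<lambda>i. if i \<in> set (x # xs) then b i else a i) p"
      using s v b by (intro exI[of _ b']) (auto simp: b'_def)
  next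
    assume "\<exists>b. (\<forall>i\<in>set (x # xs). b i \<in> V) \<and> sat V R c (\<lambda>i. if i \<in> set (x # xs) then b i else a i) p"
    then obtain b where b: "\<forall>i\<in>set (x # xs). b i \<in> V"
      and s: "sat V R c (\<lambda>i. if i \<in> set (x # xs) then b i else a i) p" by blast
    have "(\<lambda>i. if i \<in> set (x # xs) then b i else a i) = (\<lambda>i. if i \<in> set xs then b i else (a(x := b x)) i)"
      by auto
    with s have s': "sat V R c (\<lambda>i. if i \<in> set xs then b i else (a(x := b x)) i) p" by simp
    have "sat V R c (a(x := b x)) (exs xs p)"
      by (subst Cons) (use s' b in auto)
    then show "sat V R c a (exs (x # xs) p)" using b by auto
  qed
qed


lemma homs_fin: "finite (homs_to (ED :: 'd::finite \<Rightarrow> 'd \<Rightarrow> bool) n E)"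
proof -
  have "homs_to ED n E \<subseteq> {1..n} \<rightarrow>\<^sub>E (UNIV :: 'd::finite set)" by (auto simp: homs_to_def)
  moreover have "finite ({1..n} \<rightarrow>\<^sub>E (UNIV :: 'd set))" by (intro finite_PiE) auto
  ultimately show ?thesis by (rule finite_subset)
qed

lemma col_fin: "finite (coloured_graphs (ED :: 'd::finite \<Rightarrow> 'd \<Rightarrow> bool) n)"
proof -
  have "coloured_graphs ED n \<subseteq> Pow ({1..n} \<times> {1..n}) \<times> ({1..n} \<rightarrow>\<^sub>E (UNIV :: 'd set))"
    by (auto simp: coloured_graphs_def homs_to_def)
  moreover have "finite (Pow ({1..n} \<times> {1..n}) \<times> ({1..n} \<rightarrow>\<^sub>E (UNIV :: 'd set)))"
    by (intro finite_cartesian_product finite_PiE) auto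
  ultimately show ?thesis by (rule finite_subset)
qed

lemma csp_fin: "finite (csp_graphs ED n)"
proof -
  have "csp_graphs ED n \<subseteq> Pow ({1..n} \<times> {1..n})" by (auto simp: csp_graphs_def)
  then show ?thesis by (rule finite_subset) auto
qed

lemma csp_ne: "{} \<in> csp_graphs ED n"
proof -
  have "(\<lambda>_. undefined) \<in> homs_to ED n {}" by (auto simp: homs_to_def)
  then show ?thesis by (auto simp: csp_graphs_def)
qed

lemma csp_pos: "card (csp_graphs ED n) > 0"
  using csp_ne csp_fin by (metis card_gt_0_iff empty_iff)

lemma csp_le_col: "card (csp_graphs (ED :: 'd::finite \<Rightarrow> 'd \<Rightarrow> bool) n) \<le> card (coloured_graphs ED n)"
proof -
  define F where "F E = (E, SOME h. h \<in> homs_to ED n E)" for E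
  have "inj_on F (csp_graphs ED n)" by (auto simp: F_def inj_on_def)
  moreover have "F ` csp_graphs ED n \<subseteq> coloured_graphs ED n"
    by (auto simp: F_def csp_graphs_def coloured_graphs_def; metis someI)
  ultimately show ?thesis using card_inj_on_le col_fin by blast
qed

theorem lemma4p15:
  fixes ED :: "'d::finite \<Rightarrow> 'd \<Rightarrow> bool"
  assumes "is_core ED"
    and "\<forall>h. is_auto ED h \<longrightarrow> h = id"
    and "\<forall>\<phi>. sentence \<phi> \<longrightarrow> (almost_sure_col ED \<phi> \<longleftrightarrow> theory_CD ED \<phi>)"
  shows "(\<lambda>n. real (card {E \<in> csp_graphs ED n. card (homs_to ED n E) = 1})
              / real (card (csp_graphs ED n))) \<longlonglongrightarrow> 1"
proof (cases "\<exists>u. ED u u")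
  case True
  then obtain u where u: "ED u u" by blast
  have "is_endo ED (\<lambda>_. u)" using u by (auto simp: is_endo_def)
  then have "bij (\<lambda>_::'d. u)" using assms(1) by (auto simp: is_core_def is_auto_def)
  then have single: "x = y" for x y :: 'd unfolding bij_def inj_def by simp
  have "card (homs_to ED n E) = 1" if EE: "E \<in> csp_graphs ED n" for n E
  proof -
    obtain h where h: "h \<in> homs_to ED n E" using EE unfolding csp_graphs_def by blast
    have "homs_to ED n E = {h}"
    proof safe
      fix g assume g: "g \<in> homs_to ED n E"
      show "g = h"
      proof
        fix x show "g x = h x"
          using g h single by (cases "x \<in> {1..n}") (auto simp: homs_to_def PiE_def extensional_def)
      qed
    qed (use h in auto)
    then show ?thesis by simp
  qed
  then have "{E \<in> csp_graphs ED n. card (homs_to ED n E) = 1} = csp_graphs ED n" for n by auto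
  then have "(\<lambda>n. real (card {E \<in> csp_graphs ED n. card (homs_to ED n E) = 1})
              / real (card (csp_graphs ED n))) = (\<lambda>n. 1)"
    proof (intro ext)
    fix n
    have "real (card (csp_graphs ED n)) > 0" using csp_pos by simp
    then show "real (card {E \<in> csp_graphs ED n. card (homs_to ED n E) = 1}) / real (card (csp_graphs ED n)) = 1"
      using \<open>\<And>n. {E \<in> csp_graphs ED n. card (homs_to ED n E) = 1} = csp_graphs ED n\<close> by simp
  qed
  then show ?thesis by simp
next
  case False
  note loopless = False
  obtain ds :: "'d list" where ds: "distinct ds" "set ds = UNIV"
    using finite_distinct_list[of "UNIV :: 'd set"] by auto
  define idx where "idx v = (SOME i. i < length ds \<and> ds ! i = v)" for v
  have idx: "idx v < length ds \<and> ds ! idx v = v" for v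
  proof -
    have "\<exists>i. i < length ds \<and> ds ! i = v" using ds(2) by (metis UNIV_I in_set_conv_nth)
    then show ?thesis unfolding idx_def by (rule someI_ex)
  qed
  define var where "var v = Suc (idx v)" for v
  define edg :: "'d fm" where "edg = conjs [Edge (var v) (var w). v \<leftarrow> ds, w \<leftarrow> ds, ED v w]"
  define pin :: "'d fm" where "pin = conjs [imp (Col u 0) (Eq 0 (var u)). u \<leftarrow> ds]"
  define \<phi> where "\<phi> = Neg (Ex 0 (Neg (exs (map var ds) (Conj edg pin))))"
  have sat_edg: "sat V R c a edg \<longleftrightarrow> (\<forall>v w. ED v w \<longrightarrow> R (a (var v)) (a (var w)))" for V R c a
    unfolding edg_def sat_conjs using ds(2) by auto
  have sat_pin: "sat V R c a pin \<longleftrightarrow> a 0 = a (var (c (a 0)))" for V R c a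
    unfolding pin_def sat_conjs using ds(2) by (auto simp: imp_def)
  have "fv edg \<subseteq> insert 0 (range var)"
    using fv_conjs[of "[Edge (var v) (var w). v \<leftarrow> ds, w \<leftarrow> ds, ED v w]"] unfolding edg_def by auto
  moreover have "fv pin \<subseteq> insert 0 (range var)"
    using fv_conjs[of "[imp (Col u 0) (Eq 0 (var u)). u \<leftarrow> ds]"] unfolding pin_def by (auto simp: imp_def split: if_splits)
  moreover have "set (map var ds) = range var" using ds(2) by auto
  ultimately have sent: "sentence \<phi>" unfolding \<phi>_def sentence_def by (auto simp: fv_exs)
  have sat_phi: "sat V R c a \<phi> \<longleftrightarrow> (\<forall>x\<in>V. \<exists>b. (\<forall>v. b (var v) \<in> V) \<and>
      (\<forall>v w. ED v w \<longrightarrow> R (b (var v)) (b (var w))) \<and> x = b (var (c x)))" for V R c a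
  proof -
    have rv: "set (map var ds) = range var" using ds(2) by auto
    have z: "0 \<notin> range var" by (auto simp: var_def)
    show ?thesis
      unfolding \<phi>_def
      apply (simp only: sat.simps sat_exs sat_edg sat_pin rv)
      using z apply (auto simp: rv)
      done
  qed
  have thCD: "theory_CD ED \<phi>"
    unfolding theory_CD_def
  proof (intro allI impI)
    fix R :: "nat \<Rightarrow> nat \<Rightarrow> bool" and c :: "nat \<Rightarrow> 'd"
    assume CD: "is_CD ED R c"
    have resp: "\<And>x y. R x y \<Longrightarrow> ED (c x) (c y)" and
      univ: "\<And>(m::nat) (Rm :: nat \<Rightarrow> nat \<Rightarrow> bool) (cm :: nat \<Rightarrow> 'd).
        (\<forall>x<m. \<forall>y<m. Rm x y \<longrightarrow> ED (cm x) (cm y)) \<Longrightarrow>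
        (\<exists>f. inj_on f {..<m} \<and> (\<forall>x<m. \<forall>y<m. R (f x) (f y) \<longleftrightarrow> Rm x y) \<and>
             (\<forall>x<m. c (f x) = cm x))" and
      hom: "\<And>A f. finite A \<and> inj_on f A \<and> (\<forall>x\<in>A. \<forall>y\<in>A. R (f x) (f y) \<longleftrightarrow> R x y) \<and>
            (\<forall>x\<in>A. c (f x) = c x) \<Longrightarrow>
        (\<exists>g. bij g \<and> (\<forall>x y. R (g x) (g y) \<longleftrightarrow> R x y) \<and> (\<forall>x. c (g x) = c x) \<and>
             (\<forall>x\<in>A. g x = f x))"
    proof -
      have CD': "(\<forall>x y. R x y \<longrightarrow> ED (c x) (c y)) \<and>
     (\<forall>(m::nat) (Rm :: nat \<Rightarrow> nat \<Rightarrow> bool) (cm :: nat \<Rightarrow> 'd).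
        (\<forall>x<m. \<forall>y<m. Rm x y \<longrightarrow> ED (cm x) (cm y)) \<longrightarrow>
        (\<exists>f. inj_on f {..<m} \<and> (\<forall>x<m. \<forall>y<m. R (f x) (f y) \<longleftrightarrow> Rm x y) \<and>
             (\<forall>x<m. c (f x) = cm x))) \<and>
     (\<forall>A f. finite A \<and> inj_on f A \<and> (\<forall>x\<in>A. \<forall>y\<in>A. R (f x) (f y) \<longleftrightarrow> R x y) \<and>
            (\<forall>x\<in>A. c (f x) = c x) \<longrightarrow>
        (\<exists>g. bij g \<and> (\<forall>x y. R (g x) (g y) \<longleftrightarrow> R x y) \<and> (\<forall>x. c (g x) = c x) \<and>
             (\<forall>x\<in>A. g x = f x)))" using CD unfolding is_CD_def .
      note a1 = conjunct1[OF CD'] and a2 = conjunct1[OF conjunct2[OF CD']] and a3 = conjunct2[OF conjunct2[OF CD']]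
      show "\<And>x y. R x y \<Longrightarrow> ED (c x) (c y)" by (rule a1[rule_format])
      show "\<And>(m::nat) (Rm :: nat \<Rightarrow> nat \<Rightarrow> bool) (cm :: nat \<Rightarrow> 'd). (\<forall>x<m. \<forall>y<m. Rm x y \<longrightarrow> ED (cm x) (cm y)) \<Longrightarrow>
        (\<exists>f. inj_on f {..<m} \<and> (\<forall>x<m. \<forall>y<m. R (f x) (f y) \<longleftrightarrow> Rm x y) \<and>
             (\<forall>x<m. c (f x) = cm x))" by (rule mp[OF spec[OF spec[OF spec[OF a2]]]])
      show "\<And>A f. finite A \<and> inj_on f A \<and> (\<forall>x\<in>A. \<forall>y\<in>A. R (f x) (f y) \<longleftrightarrow> R x y) \<and>
            (\<forall>x\<in>A. c (f x) = c x) \<Longrightarrow>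
        (\<exists>g. bij g \<and> (\<forall>x y. R (g x) (g y) \<longleftrightarrow> R x y) \<and> (\<forall>x. c (g x) = c x) \<and>
             (\<forall>x\<in>A. g x = f x))" by (rule a3[rule_format])
    qed
    obtain f where f: "\<forall>x<length ds. \<forall>y<length ds. R (f x) (f y) \<longleftrightarrow> ED (ds ! x) (ds ! y)"
      "\<forall>x<length ds. c (f x) = ds ! x"
      using univ[of "length ds" "\<lambda>i j. ED (ds ! i) (ds ! j)" "\<lambda>i. ds ! i"] by blast
    have ex: "\<exists>b. (\<forall>v w. ED v w \<longrightarrow> R (b (var v)) (b (var w))) \<and> x = b (var (c x))" for x
    proof -
      define z where "z = f (idx (c x))"
      have cz: "c z = c x" using f(2) idx unfolding z_def by auto
      have nl: "\<not> R y y" for y using resp[of y y] loopless by auto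
      have "\<exists>g. bij g \<and> (\<forall>x y. R (g x) (g y) \<longleftrightarrow> R x y) \<and> (\<forall>x. c (g x) = c x) \<and>
             (\<forall>y\<in>{z}. g y = x)"
        by (rule hom) (use cz nl in simp)
      then obtain g where g: "\<forall>x y. R (g x) (g y) \<longleftrightarrow> R x y" "g z = x" by blast
      define b where "b i = g (f (i - 1))" for i
      have "ED v w \<longrightarrow> R (b (var v)) (b (var w))" for v w
        using g(1) f(1) idx[of v] idx[of w] by (auto simp: b_def var_def)
      moreover have "x = b (var (c x))" using g(2) by (simp add: b_def var_def z_def)
      ultimately show ?thesis by blast
    qed
    show "models UNIV R c \<phi>" unfolding models_def sat_phi
    proof (intro allI impI ballI)
      fix a :: "nat \<Rightarrow> nat" and x :: nat
      obtain b where "\<forall>v w. ED v w \<longrightarrow> R (b (var v)) (b (var w))" "x = b (var (c x))"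
        using ex by blast
      then show "\<exists>b. (\<forall>v. b (var v) \<in> UNIV) \<and>
        (\<forall>v w. ED v w \<longrightarrow> R (b (var v)) (b (var w))) \<and> x = b (var (c x))" by blast
    qed
  qed
  then have as: "almost_sure_col ED \<phi>" using assms(3) sent by blast
  have uniq: "homs_to ED n E = {h}" if n: "n \<ge> 1" and G: "(E, h) \<in> coloured_graphs ED n"
    and M: "models {1..n} (\<lambda>x y. (x, y) \<in> E) h \<phi>" for n E h
  proof -
    have h: "h \<in> homs_to ED n E" using G by (auto simp: coloured_graphs_def)
    have S: "\<forall>x\<in>{1..n}. \<exists>b. (\<forall>v. b (var v) \<in> {1..n}) \<and>
      (\<forall>v w. ED v w \<longrightarrow> (b (var v), b (var w)) \<in> E) \<and> x = b (var (h x))"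
    proof -
      have "sat {1..n} (\<lambda>x y. (x, y) \<in> E) h (\<lambda>_. 1) \<phi>" using M n unfolding models_def by simp
      then show ?thesis unfolding sat_phi by simp
    qed
    show ?thesis
    proof safe
      fix g assume g: "g \<in> homs_to ED n E"
      show "g = h"
      proof
        fix x
        show "g x = h x"
        proof (cases "x \<in> {1..n}")
          case True
          then obtain b where b: "\<forall>v w. ED v w \<longrightarrow> (b (var v), b (var w)) \<in> E" "x = b (var (h x))"
            using S by blast
          have "is_endo ED (\<lambda>v. g (b (var v)))"
            using b(1) g unfolding is_endo_def homs_to_def by blast
          then have "is_auto ED (\<lambda>v. g (b (var v)))" using assms(1) unfolding is_core_def by blast
          then have "(\<lambda>v. g (b (var v))) = id" using assms(2) by blast
          then have "g (b (var (h x))) = h x" by (metis id_apply)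
          then show ?thesis using b(2) by simp
        next
          case False
          then show ?thesis using g h by (auto simp: homs_to_def PiE_def extensional_def)
        qed
      qed
    qed (use h in auto)
  qed
  define T where "T n = {G \<in> coloured_graphs ED n. models {1..n} (\<lambda>x y. (x, y) \<in> fst G) (snd G) \<phi>}" for n
  define S where "S n = {E \<in> csp_graphs ED n. card (homs_to ED n E) = 1}" for n
  have TS: "card (T n) \<le> card (S n)" if n: "n \<ge> 1" for n
  proof -
    have "inj_on fst (T n)"
    proof
      fix G G'
      assume G: "G \<in> T n" and G': "G' \<in> T n" and e: "fst G = fst G'"
      have "homs_to ED n (fst G) = {snd G}" using G uniq[OF n, of "fst G" "snd G"] unfolding T_def by simp
      moreover have "homs_to ED n (fst G') = {snd G'}" using G' uniq[OF n, of "fst G'" "snd G'"] unfolding T_def by simp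
      ultimately have "snd G = snd G'" using e by simp
      then show "G = G'" using e by (simp add: prod_eq_iff)
    qed
    moreover have "fst ` T n \<subseteq> S n"
    proof
      fix E assume "E \<in> fst ` T n"
      then obtain h where "(E, h) \<in> T n" by force
      then have "(E, h) \<in> coloured_graphs ED n" "homs_to ED n E = {h}"
        using uniq[OF n] unfolding T_def by auto
      then show "E \<in> S n" unfolding S_def csp_graphs_def coloured_graphs_def by auto
    qed
    moreover have "finite (S n)" unfolding S_def using csp_fin[of ED n] by simp
    ultimately show ?thesis using card_inj_on_le by blast
  qed
  have Tlim: "(\<lambda>n. real (card (T n)) / real (card (coloured_graphs ED n))) \<longlonglongrightarrow> 1"
    using as unfolding almost_sure_col_def T_def .
  have "(\<lambda>n. real (card (S n)) / real (card (csp_graphs ED n))) \<longlonglongrightarrow> 1"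
  proof (rule tendsto_sandwich[OF _ _ Tlim tendsto_const])
    show "\<forall>\<^sub>F n in sequentially. real (card (T n)) / real (card (coloured_graphs ED n))
       \<le> real (card (S n)) / real (card (csp_graphs ED n))"
      unfolding eventually_sequentially
    proof (intro exI allI impI)
      fix n :: nat assume n: "n \<ge> 1"
      have p: "real (card (csp_graphs ED n)) > 0" using csp_pos by simp
      have q: "real (card (csp_graphs ED n)) \<le> real (card (coloured_graphs ED n))" using csp_le_col by simp
      have "real (card (T n)) / real (card (coloured_graphs ED n)) \<le> real (card (S n)) / real (card (coloured_graphs ED n))"
        using TS[OF n] by (simp add: divide_right_mono)
      also have "\<dots> \<le> real (card (S n)) / real (card (csp_graphs ED n))"
        using p q by (simp add: divide_left_mono)
      finally show "real (card (T n)) / real (card (coloured_graphs ED n))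
       \<le> real (card (S n)) / real (card (csp_graphs ED n))" .
    qed
    show "\<forall>\<^sub>F n in sequentially. real (card (S n)) / real (card (csp_graphs ED n)) \<le> 1"
    proof (intro always_eventually allI)
      fix n
      have p: "real (card (csp_graphs ED n)) > 0" using csp_pos by simp
      have "S n \<subseteq> csp_graphs ED n" unfolding S_def by auto
      then have "card (S n) \<le> card (csp_graphs ED n)" using csp_fin card_mono by blast
      then show "real (card (S n)) / real (card (csp_graphs ED n)) \<le> 1" using p by simp
    qed
  qed
  then show ?thesis unfolding S_def .
qed

end
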